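(* Let $\mathcal G=(\bar Q,\mu,\eta)$ be $\sigma$-admissible. For any policy $\pi$, the shielded policy $\pi'=\mathcal G(\pi)$ satisfies $$\bar V^{\pi'}(d_0)\le \bar Q(d_0,\mu)+\frac{\min\{\sigma+\eta,2\gamma\}}{1-\gamma}.$$
   Context: $\mathcal M=(\mathcal S,\mathcal A,P,r,\gamma)$ is a discounted MDP with discrete state space $\mathcal S$, discrete action space $\mathcal A$, transition kernel $P$, reward $r\in[0,1]$, discount $\gamma\in[0,1)$, initial distribution $d_0$. $\mathcal S$ contains two distinguished states $s_\triangleright,s_\circ$; $\mathcal S_{\mathrm{unsafe}}=\{s_\triangleright,s_\circ\}$, $\mathcal S_{\mathrm{safe}}=\mathcal S\setminus\mathcal S_{\mathrm{unsafe}}$. From $s_\triangleright$ every action leads to $s_\circ$ w.p. 1, $s_\circ$ is absorbing, and $d_0(s_\circ)=0$. Cost $c(s,a)=\mathbb 1\{s=s_\triangleright\}$; $\bar V^\pi(s)=\mathbb E[\sum_{t\ge0}\gamma^tc(s_t,a_t)\mid s_0=s]$ for trajectories of the stationary policy $\pi$ in $\mathcal M$, and $\bar V^\pi(d_0)=\mathbb E_{s\sim d_0}\bar V^\pi(s)$. For $g:\mathcal S\times\mathcal A\to\mathbb R$ and a policy $\mu$, $g(s,\mu)=\mathbb E_{a\sim\mu(\cdot|s)}g(s,a)$ and $g(d_0,\mu)=\mathbb E_{s\sim d_0}g(s,\mu)$. Intervention rule: a triple $\mathcal G=(\bar Q,\mu,\eta)$ with backup policy $\mu$, threshold $\eta\in[0,1]$,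 and $\bar Q:\mathcal S_{\mathrm{safe}}\times\mathcal A\to[0,1]$ extended by $\bar Q(s_\triangleright,a)=1$, $\bar Q(s_\circ,a)=0$. $\bar A(s,a)=\bar Q(s,a)-\bar Q(s,\mu)$; intervention set $\mathcal I=\{(s,a)\in\mathcal S_{\mathrm{safe}}\times\mathcal A:\bar A(s,a)>\eta\}$. The shielded policy $\pi'=\mathcal G(\pi)$ is $\pi'(a|s)=\pi(a|s)\mathbb 1\{(s,a)\notin\mathcal I\}+w(s)\mu(a|s)$, $w(s)=\sum_{\tilde a:(s,\tilde a)\in\mathcal I}\pi(\tilde a|s)$. $\mathcal G$ is $\sigma$-admissible ($\sigma\ge0$) if for all $s\in\mathcal S_{\mathrm{safe}},a\in\mathcal A$: $\bar Q(s,a)\in[0,\gamma]$ and $\bar Q(s,a)+\sigma\ge c(s,a)+\gamma\mathbb E_{s'\sim P(\cdot|s,a)}[\bar Q(s',\mu)]$. *)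

theory Defs
  imports "HOL-Probability.Probability_Mass_Function"
begin

(* States have type 's, actions type 'a; distributions are pmfs (countable support,
   i.e. discrete). *)

definition cost :: "'s \<Rightarrow> 's \<Rightarrow> 'a \<Rightarrow> real" where
  "cost s_tri s a = (if s = s_tri then 1 else 0)"

primrec state_dist :: "('s \<Rightarrow> 'a \<Rightarrow> 's pmf) \<Rightarrow> ('s \<Rightarrow> 'a pmf) \<Rightarrow> 's \<Rightarrow> nat \<Rightarrow> 's pmf" where
  "state_dist P pol s 0 = return_pmf s"
| "state_dist P pol s (Suc t) =
     bind_pmf (state_dist P pol s t) (\<lambda>x. bind_pmf (pol x) (\<lambda>a. P x a))"

text \<open>Cost value: Vbar(s) = E[ sum_t gamma^t c(s_t,a_t) | s_0 = s ], written as the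
  sum over t of gamma^t times the expected cost at time t.\<close>
definition Vbar :: "('s \<Rightarrow> 'a \<Rightarrow> 's pmf) \<Rightarrow> 's \<Rightarrow> real \<Rightarrow> ('s \<Rightarrow> 'a pmf) \<Rightarrow> 's \<Rightarrow> real" where
  "Vbar P s_tri \<gamma> pol s =
     (\<Sum>t. \<gamma> ^ t * measure_pmf.expectation (state_dist P pol s t)
                 (\<lambda>x. measure_pmf.expectation (pol x) (\<lambda>a. cost s_tri x a)))"

definition Vbar_init :: "('s \<Rightarrow> 'a \<Rightarrow> 's pmf) \<Rightarrow> 's \<Rightarrow> real \<Rightarrow> ('s \<Rightarrow> 'a pmf) \<Rightarrow> 's pmf \<Rightarrow> real" where
  "Vbar_init P s_tri \<gamma> pol d0 = measure_pmf.expectation d0 (Vbar P s_tri \<gamma> pol)"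

definition Qext :: "('s \<Rightarrow> 'a \<Rightarrow> real) \<Rightarrow> 's \<Rightarrow> 's \<Rightarrow> 's \<Rightarrow> 'a \<Rightarrow> real" where
  "Qext Q s_tri s_circ s a = (if s = s_tri then 1 else if s = s_circ then 0 else Q s a)"

definition polavg :: "('s \<Rightarrow> 'a \<Rightarrow> real) \<Rightarrow> ('s \<Rightarrow> 'a pmf) \<Rightarrow> 's \<Rightarrow> real" where
  "polavg g mu s = measure_pmf.expectation (mu s) (g s)"

definition Adv :: "('s \<Rightarrow> 'a \<Rightarrow> real) \<Rightarrow> 's \<Rightarrow> 's \<Rightarrow> ('s \<Rightarrow> 'a pmf) \<Rightarrow> 's \<Rightarrow> 'a \<Rightarrow> real" where
  "Adv Q s_tri s_circ mu s a = Qext Q s_tri s_circ s a - polavg (Qext Q s_tri s_circ) mu s"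

definition interv :: "('s \<Rightarrow> 'a \<Rightarrow> real) \<Rightarrow> 's \<Rightarrow> 's \<Rightarrow> ('s \<Rightarrow> 'a pmf) \<Rightarrow> real \<Rightarrow> ('s \<times> 'a) set" where
  "interv Q s_tri s_circ mu \<eta> =
     {(s, a). s \<notin> {s_tri, s_circ} \<and> Adv Q s_tri s_circ mu s a > \<eta>}"

definition shield :: "('s \<Rightarrow> 'a \<Rightarrow> real) \<Rightarrow> 's \<Rightarrow> 's \<Rightarrow> ('s \<Rightarrow> 'a pmf) \<Rightarrow> real
    \<Rightarrow> ('s \<Rightarrow> 'a pmf) \<Rightarrow> ('s \<Rightarrow> 'a pmf)" where
  "shield Q s_tri s_circ mu \<eta> pol = (\<lambda>s. embed_pmf (\<lambda>a.
     pmf (pol s) a * (if (s, a) \<notin> interv Q s_tri s_circ mu \<eta> then 1 else 0)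
     + measure_pmf.prob (pol s) {a'. (s, a') \<in> interv Q s_tri s_circ mu \<eta>} * pmf (mu s) a))"

definition admissible :: "('s \<Rightarrow> 'a \<Rightarrow> 's pmf) \<Rightarrow> 's \<Rightarrow> 's \<Rightarrow> real
    \<Rightarrow> ('s \<Rightarrow> 'a \<Rightarrow> real) \<Rightarrow> ('s \<Rightarrow> 'a pmf) \<Rightarrow> real \<Rightarrow> bool" where
  "admissible P s_tri s_circ \<gamma> Q mu \<sigma> \<longleftrightarrow>
     (\<forall>s a. s \<notin> {s_tri, s_circ} \<longrightarrow>
        0 \<le> Q s a \<and> Q s a \<le> \<gamma> \<and>
        Qext Q s_tri s_circ s a + \<sigma> \<ge> cost s_tri s a
          + \<gamma> * measure_pmf.expectation (P s a) (polavg (Qext Q s_tri s_circ) mu))"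

end

theory Submission
  imports Defs
begin
lemma bintg: fixes f :: "_ \<Rightarrow> real"
  assumes "\<And>x. \<bar>f x\<bar> \<le> B"
  shows "integrable (measure_pmf M) f"
  apply (rule measure_pmf.integrable_const_bound[where B=B])
  using assms by auto

lemma pmf_mix: "pmf (bind_pmf p (\<lambda>a. if a \<in> I then q else return_pmf a)) x
   = pmf p x * (if x \<notin> I then 1 else 0) + measure_pmf.prob p I * pmf q x"
proof -
  have eq: "(\<lambda>a. pmf (if a \<in> I then q else return_pmf a) x)
      = (\<lambda>a. pmf q x * indicator I a + indicator ({x} - I) a)"
    by (auto simp: indicator_def)
  have "pmf (bind_pmf p (\<lambda>a. if a \<in> I then q else return_pmf a)) x
     = measure_pmf.expectation p (\<lambda>a. pmf q x * indicator I a + indicator ({x} - I) a)"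
    unfolding pmf_bind eq ..
  also have "\<dots> = pmf q x * measure_pmf.prob p I + measure_pmf.prob p ({x} - I)"
  proof -
    have i1: "integrable (measure_pmf p) (\<lambda>a. pmf q x * indicator I a)"
      by (rule bintg[where B="pmf q x"]) (auto simp: indicator_def)
    have i2: "integrable (measure_pmf p) (indicator ({x} - I) :: _ \<Rightarrow> real)"
      by (rule bintg[where B=1]) (auto simp: indicator_def)
    show ?thesis using Bochner_Integration.integral_add[OF i1 i2] by simp
  qed
  also have "measure_pmf.prob p ({x} - I) = pmf p x * (if x \<notin> I then 1 else 0)"
  proof (cases "x \<in> I")
    case False then have "{x} - I = {x}" by auto
    then show ?thesis using False by (simp add: measure_pmf_single)
  qed simp
  finally show ?thesis by simp
qed

lemma shield_bind: "shield Q st sc mu \<eta> pol s =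
   bind_pmf (pol s) (\<lambda>a. if a \<in> {a. (s,a) \<in> interv Q st sc mu \<eta>} then mu s else return_pmf a)"
proof -
  let ?B = "bind_pmf (pol s) (\<lambda>a. if a \<in> {a. (s,a) \<in> interv Q st sc mu \<eta>} then mu s else return_pmf a)"
  have "shield Q st sc mu \<eta> pol s = embed_pmf (pmf ?B)"
    unfolding shield_def pmf_mix by simp
  also have "\<dots> = ?B" by (rule type_definition.Rep_inverse[OF td_pmf_embed_pmf])
  finally show ?thesis .
qed

lemma bint: fixes f :: "_ \<Rightarrow> real"
  assumes "\<And>x. \<bar>f x\<bar> \<le> B"
  shows "measure_pmf.expectation (bind_pmf M N) f = measure_pmf.expectation M (\<lambda>x. measure_pmf.expectation (N x) f)"
  unfolding measure_pmf_bind
  apply (rule integral_bind[where K="count_space UNIV" and B=B and B'=1])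
  using assms measurable_measure_pmf[of N] by (auto intro: measure_pmf.finite_measure_axioms simp: measure_pmf.emeasure_space_1)

lemma exp_mono: fixes f g :: "_ \<Rightarrow> real"
  assumes "\<And>y. f y \<le> g y" "\<And>y. \<bar>f y\<bar> \<le> B" "\<And>y. \<bar>g y\<bar> \<le> C"
  shows "measure_pmf.expectation p f \<le> measure_pmf.expectation p g"
  by (rule integral_mono[OF bintg[OF assms(2)] bintg[OF assms(3)] assms(1)])

lemma exp_le_const: fixes f :: "_ \<Rightarrow> real"
  assumes "\<And>y. f y \<le> c" "\<And>y. \<bar>f y\<bar> \<le> B"
  shows "measure_pmf.expectation p f \<le> c"
proof -
  have "measure_pmf.expectation p f \<le> measure_pmf.expectation p (\<lambda>_. c)"
    by (rule exp_mono[OF assms(1,2), of "\<bar>c\<bar>"]) auto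
  then show ?thesis by simp
qed

lemma exp_ge_const: fixes f :: "_ \<Rightarrow> real"
  assumes "\<And>y. c \<le> f y" "\<And>y. \<bar>f y\<bar> \<le> B"
  shows "c \<le> measure_pmf.expectation p f"
proof -
  have "measure_pmf.expectation p (\<lambda>_. c) \<le> measure_pmf.expectation p f"
    by (rule exp_mono[OF assms(1) _ assms(2), of "\<bar>c\<bar>"]) auto
  then show ?thesis by simp
qed

lemma exp_abs: fixes f :: "_ \<Rightarrow> real"
  assumes "\<And>y. \<bar>f y\<bar> \<le> B"
  shows "\<bar>measure_pmf.expectation p f\<bar> \<le> B"
proof -
  have l: "f y \<le> B" and r: "-B \<le> f y" for y using assms[of y] by auto
  have "measure_pmf.expectation p f \<le> B"
    by (rule exp_le_const[where B=B, OF l assms])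
  moreover have "-B \<le> measure_pmf.expectation p f"
    by (rule exp_ge_const[where B=B, OF r assms])
  ultimately show ?thesis by auto
qed

lemma exp_add_const: fixes f :: "_ \<Rightarrow> real"
  assumes "\<And>y. \<bar>f y\<bar> \<le> B"
  shows "measure_pmf.expectation p (\<lambda>y. f y + c) = measure_pmf.expectation p f + c"
proof -
  have "measure_pmf.expectation p (\<lambda>y. f y + c) = measure_pmf.expectation p f + measure_pmf.expectation p (\<lambda>_. c)"
    by (rule Bochner_Integration.integral_add[OF bintg[OF assms]]) (rule bintg[of _ "\<bar>c\<bar>"], simp)
  then show ?thesis by simp
qed

lemma exp_add: fixes f g :: "_ \<Rightarrow> real"
  assumes "\<And>y. \<bar>f y\<bar> \<le> B" "\<And>y. \<bar>g y\<bar> \<le> C"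
  shows "measure_pmf.expectation p (\<lambda>y. f y + g y) = measure_pmf.expectation p f + measure_pmf.expectation p g"
  by (rule Bochner_Integration.integral_add[OF bintg[OF assms(1)] bintg[OF assms(2)]])

theorem mainTheorem2:
  fixes P :: "'s \<Rightarrow> 'a \<Rightarrow> 's pmf" and d0 :: "'s pmf"
    and s_tri s_circ :: 's and \<gamma> \<eta> \<sigma> :: real
    and Q :: "'s \<Rightarrow> 'a \<Rightarrow> real" and mu pol :: "'s \<Rightarrow> 'a pmf"
  assumes gamma: "0 \<le> \<gamma>" "\<gamma> < 1"
    and distinct: "s_tri \<noteq> s_circ"
    and tri_to_circ: "\<And>a. P s_tri a = return_pmf s_circ"
    and circ_absorb: "\<And>a. P s_circ a = return_pmf s_circ"
    and d0_circ: "pmf d0 s_circ = 0"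
    and eta: "0 \<le> \<eta>" "\<eta> \<le> 1"
    and sigma: "0 \<le> \<sigma>"
    and Qrange: "\<And>s a. s \<notin> {s_tri, s_circ} \<Longrightarrow> 0 \<le> Q s a \<and> Q s a \<le> 1"
    and adm: "admissible P s_tri s_circ \<gamma> Q mu \<sigma>"
  shows "Vbar_init P s_tri \<gamma> (shield Q s_tri s_circ mu \<eta> pol) d0
           \<le> measure_pmf.expectation d0 (polavg (Qext Q s_tri s_circ) mu)
             + min (\<sigma> + \<eta>) (2 * \<gamma>) / (1 - \<gamma>)"
proof -
  define QE where "QE = Qext Q s_tri s_circ"
  define Qm where "Qm = polavg QE mu"
  define pol' where "pol' = shield Q s_tri s_circ mu \<eta> pol"
  define \<delta> where "\<delta> = min (\<sigma> + \<eta>) (2 * \<gamma>)"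
  define f where "f x = Qm x + \<delta> / (1 - \<gamma>)" for x
  define g where "g x = measure_pmf.expectation (pol' x) (\<lambda>a. cost s_tri x a)" for x
  define K where "K x = bind_pmf (pol' x) (P x)" for x
  define B where "B = 1 + \<delta> / (1 - \<gamma>)"
  have d0': "0 \<le> \<delta>" unfolding \<delta>_def using gamma eta sigma by auto
  have dg: "0 \<le> \<delta> / (1 - \<gamma>)" using d0' gamma by auto
  have QE_r: "0 \<le> QE s a \<and> QE s a \<le> 1" for s a
    unfolding QE_def Qext_def using Qrange[of s a] by auto
  have QE_abs: "\<bar>QE s a\<bar> \<le> 1" for s a using QE_r[of s a] by auto
  have Qm_r: "0 \<le> Qm s \<and> Qm s \<le> 1" for s
    unfolding Qm_def polavg_def
    using exp_le_const[of "QE s" 1 1 "mu s"] exp_ge_const[of 0 "QE s" 1 "mu s"] QE_r QE_abs by auto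
  have Qm_abs: "\<bar>Qm s\<bar> \<le> 1" for s using Qm_r[of s] by auto
  have f_r: "0 \<le> f x \<and> f x \<le> B" for x unfolding f_def B_def using Qm_r[of x] dg by auto
  have f_abs: "\<bar>f x\<bar> \<le> B" for x using f_r[of x] by auto
  have g_eq: "g x = (if x = s_tri then 1 else 0)" for x unfolding g_def cost_def by simp
  have g_abs: "\<bar>g x\<bar> \<le> 1" for x unfolding g_eq by auto
  have Qm_tri: "Qm s_tri = 1" unfolding Qm_def polavg_def QE_def Qext_def by simp
  have Qm_circ: "Qm s_circ = 0" unfolding Qm_def polavg_def QE_def Qext_def using distinct by simp
  have key0: "g x + \<gamma> * measure_pmf.expectation (K x) Qm \<le> Qm x + \<delta>" for x
  proof -
    have EK: "measure_pmf.expectation (K x) Qm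
        = measure_pmf.expectation (pol' x) (\<lambda>a. measure_pmf.expectation (P x a) Qm)"
      unfolding K_def by (rule bint[OF Qm_abs])
    show ?thesis
    proof (cases "x = s_tri \<or> x = s_circ")
      case True
      then show ?thesis
        using EK tri_to_circ circ_absorb Qm_tri Qm_circ d0' distinct g_eq by auto
    next
      case False
      then have xs: "x \<notin> {s_tri, s_circ}" by auto
      define h where "h a = measure_pmf.expectation (P x a) Qm" for a
      have h_r: "0 \<le> h a \<and> h a \<le> 1" for a unfolding h_def
        using exp_le_const[of Qm 1 1 "P x a"] exp_ge_const[of 0 Qm 1 "P x a"] Qm_r Qm_abs by auto
      have h_abs: "\<bar>h a\<bar> \<le> 1" for a using h_r[of a] by auto
      have g0: "g x = 0" using False g_eq by auto
      have Eh1: "measure_pmf.expectation (pol' x) h \<le> 1"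
        by (rule exp_le_const[OF _ h_abs]) (use h_r in auto)
      have b1: "\<gamma> * measure_pmf.expectation (pol' x) h \<le> Qm x + 2 * \<gamma>"
        using Eh1 gamma Qm_r[of x] mult_left_mono[OF Eh1 gamma(1)] by auto
      have admx: "\<gamma> * h a \<le> QE x a + \<sigma>" for a
        using adm xs unfolding admissible_def h_def Qm_def QE_def cost_def
        by (auto dest!: spec[of _ x] spec[of _ a])
      have "\<gamma> * measure_pmf.expectation (pol' x) h = measure_pmf.expectation (pol' x) (\<lambda>a. \<gamma> * h a)"
        by simp
      also have "\<dots> \<le> measure_pmf.expectation (pol' x) (\<lambda>a. QE x a + \<sigma>)"
        proof (rule exp_mono[where B="\<bar>\<gamma>\<bar>" and C="1 + \<bar>\<sigma>\<bar>", OF admx])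
        fix a
        show "\<bar>\<gamma> * h a\<bar> \<le> \<bar>\<gamma>\<bar>"
          using mult_left_mono[OF h_abs[of a] gamma(1)] gamma by (simp add: abs_mult)
      next
        fix a
        show "\<bar>QE x a + \<sigma>\<bar> \<le> 1 + \<bar>\<sigma>\<bar>"
          using QE_abs[of x a] by (auto intro: order_trans[OF abs_triangle_ineq])
      qed
      also have "\<dots> = measure_pmf.expectation (pol' x) (QE x) + \<sigma>"
        by (rule exp_add_const[OF QE_abs])
      also have "measure_pmf.expectation (pol' x) (QE x) \<le> Qm x + \<eta>"
      proof -
        define I where "I = {a. (x, a) \<in> interv Q s_tri s_circ mu \<eta>}"
        have "measure_pmf.expectation (pol' x) (QE x)
            = measure_pmf.expectation (pol x) (\<lambda>a. measure_pmf.expectation (if a \<in> I then mu x else return_pmf a) (QE x))"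
          unfolding pol'_def shield_bind I_def by (rule bint[OF QE_abs])
        also have "\<dots> = measure_pmf.expectation (pol x) (\<lambda>a. if a \<in> I then Qm x else QE x a)"
          unfolding Qm_def polavg_def by (rule arg_cong[where f="measure_pmf.expectation (pol x)"]) (auto simp: fun_eq_iff)
        also have "\<dots> \<le> Qm x + \<eta>"
        proof (rule exp_le_const[where B=1])
          fix a show "(if a \<in> I then Qm x else QE x a) \<le> Qm x + \<eta>"
            using xs eta unfolding I_def interv_def Adv_def Qm_def QE_def by auto
        next
          fix a show "\<bar>if a \<in> I then Qm x else QE x a\<bar> \<le> 1" using Qm_abs QE_abs by auto
        qed
        finally show ?thesis .
      qed
      finally have b2: "\<gamma> * measure_pmf.expectation (pol' x) h \<le> Qm x + (\<sigma> + \<eta>)" by simp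
      show ?thesis using EK b1 b2 g0 unfolding h_def[symmetric] \<delta>_def by auto
    qed
  qed
  have key: "g x + \<gamma> * measure_pmf.expectation (K x) f \<le> f x" for x
  proof -
    have "measure_pmf.expectation (K x) f = measure_pmf.expectation (K x) Qm + \<delta> / (1 - \<gamma>)"
      unfolding f_def by (rule exp_add_const[OF Qm_abs])
    moreover have "\<delta> + \<gamma> * (\<delta> / (1 - \<gamma>)) = \<delta> / (1 - \<gamma>)"
      using gamma by (simp add: field_simps)
    ultimately show ?thesis using key0[of x] unfolding f_def by (simp add: algebra_simps)
  qed
  have Vle: "0 \<le> Vbar P s_tri \<gamma> pol' s \<and> Vbar P s_tri \<gamma> pol' s \<le> f s" for s
  proof -
    define d where "d t = state_dist P pol' s t" for t
    define a where "a t = \<gamma> ^ t * measure_pmf.expectation (d t) g" for t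
    have V: "Vbar P s_tri \<gamma> pol' s = suminf a"
      unfolding Vbar_def a_def d_def g_def ..
    have a0: "0 \<le> a t" for t unfolding a_def
      using exp_ge_const[of 0 g 1 "d t"] g_abs gamma by (auto simp: g_eq)
    have step: "measure_pmf.expectation (d t) g + \<gamma> * measure_pmf.expectation (d (Suc t)) f
        \<le> measure_pmf.expectation (d t) f" for t
    proof -
      have Kb: "\<bar>measure_pmf.expectation (K x) f\<bar> \<le> B" for x by (rule exp_abs[OF f_abs])
      have "measure_pmf.expectation (d (Suc t)) f = measure_pmf.expectation (d t) (\<lambda>x. measure_pmf.expectation (K x) f)"
        unfolding d_def state_dist.simps K_def by (rule bint[OF f_abs])
      then have "measure_pmf.expectation (d t) g + \<gamma> * measure_pmf.expectation (d (Suc t)) f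
          = measure_pmf.expectation (d t) (\<lambda>x. g x + \<gamma> * measure_pmf.expectation (K x) f)"
        by (subst exp_add[where C="\<gamma> * B", OF g_abs]) (use Kb gamma in \<open>auto simp: abs_mult intro: mult_left_mono\<close>)
      also have "\<dots> \<le> measure_pmf.expectation (d t) f"
        by (rule exp_mono[where B="1 + \<gamma> * B" and C=B, OF key])
           (use Kb gamma g_abs f_abs in \<open>auto simp: abs_mult intro!: order_trans[OF abs_triangle_ineq] add_mono mult_left_mono\<close>)
      finally show ?thesis .
    qed
    have tel: "sum a {..<n} + \<gamma> ^ n * measure_pmf.expectation (d n) f \<le> f s" for n
    proof (induction n)
      case 0 then show ?case by (simp add: d_def)
    next
      case (Suc n)
      have "sum a {..<Suc n} + \<gamma> ^ Suc n * measure_pmf.expectation (d (Suc n)) f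
          = sum a {..<n} + \<gamma> ^ n * (measure_pmf.expectation (d n) g + \<gamma> * measure_pmf.expectation (d (Suc n)) f)"
        by (simp add: a_def algebra_simps)
      also have "\<dots> \<le> sum a {..<n} + \<gamma> ^ n * measure_pmf.expectation (d n) f"
        using step[of n] gamma by (simp add: mult_left_mono)
      finally show ?case using Suc by simp
    qed
    have psum: "sum a {..<n} \<le> f s" for n
    proof -
      have "0 \<le> \<gamma> ^ n * measure_pmf.expectation (d n) f"
        using exp_ge_const[of 0 f B "d n"] f_r f_abs gamma by auto
      then show ?thesis using tel[of n] by linarith
    qed
    have sm: "summable a"
      by (rule bounded_imp_summable[where B="f s", OF a0]) (metis psum lessThan_Suc_atMost)
    show ?thesis unfolding V using suminf_le_const[OF sm psum] suminf_nonneg[OF sm a0] by auto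
  qed
  have Vabs: "\<bar>Vbar P s_tri \<gamma> pol' s\<bar> \<le> B" for s using Vle[of s] f_r[of s] by auto
  have "Vbar_init P s_tri \<gamma> pol' d0 \<le> measure_pmf.expectation d0 f"
    unfolding Vbar_init_def by (rule exp_mono[OF _ Vabs f_abs]) (use Vle in auto)
  also have "\<dots> = measure_pmf.expectation d0 Qm + \<delta> / (1 - \<gamma>)"
    unfolding f_def by (rule exp_add_const[OF Qm_abs])
  finally show ?thesis unfolding pol'_def Qm_def QE_def \<delta>_def .
qed

end
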